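(* Let $\psi:[0,2]\to[0,+\infty)$ be a decreasing $C^1$ function with $\psi(2)=0$ and $\psi'(2)<0$. Let $Q:=(\mathbb{R}^3\setminus\{0\})\times(\mathbb{R}^3\setminus\{0\})\times\mathbb{R}^3$ and define $T:Q\to\mathbb{R}^3$ by $$T(x_1,x_2,v)=\begin{cases}\psi\Big(\Big\|\frac{x_1}{\|x_1\|}-\frac{x_2}{\|x_2\|}\Big\|\Big)\,R\Big(\frac{x_2}{\|x_2\|},\frac{x_1}{\|x_1\|}\Big)v, & \text{if } \frac{x_1}{\|x_1\|}+\frac{x_2}{\|x_2\|}\neq0,\\ 0, & \text{if } \frac{x_1}{\|x_1\|}+\frac{x_2}{\|x_2\|}=0.\end{cases}$$ Then $T$ is locally Lipschitz continuous on $Q$.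
   Context: $\|\cdot\|$ is the Euclidean norm on $\mathbb{R}^3$. For column vectors $a,b$ in the unit sphere $\mathbb{S}^2$ with $a\ne-b$, $R(a,b)=I$ if $a=b$, and otherwise $$R(a,b)=\langle a,b\rangle I-ab^T+ba^T+(1-\langle a,b\rangle)\Big(\frac{a\times b}{\|a\times b\|}\Big)\Big(\frac{a\times b}{\|a\times b\|}\Big)^T.$$ *)

theory Defs
  imports "HOL-Analysis.Analysis" "HOL-Analysis.Cross3"
begin

unbundle no cross3_syntax
unbundle set_product_syntax

definition outer :: "real^3 \<Rightarrow> real^3 \<Rightarrow> real^3^3" where
  "outer a b = (\<chi> i j. a $ i * b $ j)"

text \<open>The rotation matrix R(a,b) from the paper (meaningful for unit a, b with a \<noteq> -b).\<close>
definition Rot :: "real^3 \<Rightarrow> real^3 \<Rightarrow> real^3^3" where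
  "Rot a b = (if a = b then mat 1 else
     let n = (1 / norm (cross3 a b)) *\<^sub>R (cross3 a b) in
       (a \<bullet> b) *\<^sub>R mat 1 - outer a b + outer b a + (1 - a \<bullet> b) *\<^sub>R outer n n)"

definition Qset :: "((real^3) \<times> (real^3) \<times> (real^3)) set" where
  "Qset = (- {0}) \<times> (- {0}) \<times> UNIV"

definition Tmap :: "(real \<Rightarrow> real) \<Rightarrow> (real^3) \<times> (real^3) \<times> (real^3) \<Rightarrow> real^3" where
  "Tmap \<psi> p = (case p of (x1, x2, v) \<Rightarrow>
     let u1 = (1 / norm x1) *\<^sub>R x1; u2 = (1 / norm x2) *\<^sub>R x2 in
     if u1 + u2 \<noteq> 0 then \<psi> (norm (u1 - u2)) *\<^sub>R (Rot u2 u1 *v v) else 0)"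

definition locally_lipschitz_on :: "'a::metric_space set \<Rightarrow> ('a \<Rightarrow> 'b::metric_space) \<Rightarrow> bool" where
  "locally_lipschitz_on S f \<longleftrightarrow>
     (\<forall>x\<in>S. \<exists>e>0. \<exists>L. L-lipschitz_on (ball x e \<inter> S) f)"

end

theory Submission
  imports Defs
begin

lemma outer_apply: "outer a b *v w = (b \<bullet> w) *\<^sub>R a"
  by (simp add: vec_eq_iff matrix_vector_mult_def outer_def inner_vec_def sum_3 algebra_simps)

lemma smat_apply: "((r::real) *\<^sub>R (M::real^3^3)) *v w = r *\<^sub>R (M *v w)"
  by (simp add: vec_eq_iff matrix_vector_mult_def sum_distrib_left mult.assoc)

lemma unit_dot: "norm (a::real^3) = 1 \<Longrightarrow> a \<bullet> a = 1"
  by (simp add: dot_square_norm)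

lemma unit_inner_eq_m1:
  fixes a b :: "real^3"
  assumes "norm a = 1" "norm b = 1" "a \<bullet> b = -1" shows "a + b = 0"
proof -
  have "(norm (a+b))^2 = 0" using assms by (simp add: power2_norm_eq_inner algebra_simps inner_commute unit_dot)
  then show ?thesis by simp
qed

lemma unit_inner_eq_1:
  fixes a b :: "real^3"
  assumes "norm a = 1" "norm b = 1" "a \<bullet> b = 1" shows "a = b"
proof -
  have "(norm (a-b))^2 = 0" using assms by (simp add: power2_norm_eq_inner algebra_simps inner_commute unit_dot)
  then show ?thesis by simp
qed

lemma Rot_apply:
  fixes a b w :: "real^3"
  assumes a: "norm a = 1" and b: "norm b = 1" and ab: "a + b \<noteq> 0"
  shows "Rot a b *v w = (a \<bullet> b) *\<^sub>R w - (b \<bullet> w) *\<^sub>R a + (a \<bullet> w) *\<^sub>R b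
     + ((cross3 a b \<bullet> w) / (1 + a \<bullet> b)) *\<^sub>R cross3 a b"
proof (cases "a = b")
  case True
  have "a \<bullet> a = 1" using a by (simp add: unit_dot)
  then show ?thesis using True by (simp add: Rot_def)
next
  case False
  define c where "c = cross3 a b"
  have h1: "1 + a \<bullet> b \<noteq> 0" using unit_inner_eq_m1[OF a b] ab by auto
  have h2: "1 - a \<bullet> b \<noteq> 0" using unit_inner_eq_1[OF a b] False by auto
  have nc: "(norm c)^2 = (1 - a \<bullet> b) * (1 + a \<bullet> b)"
    using norm_cross_dot[of a b] a b unfolding c_def by (simp add: algebra_simps power2_eq_square)
  have ncz: "norm c \<noteq> 0" using nc h1 h2 by auto
  have "Rot a b *v w = (a \<bullet> b) *\<^sub>R w - (b \<bullet> w) *\<^sub>R a + (a \<bullet> w) *\<^sub>R b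
     + ((1 - a \<bullet> b) * (1 / norm c)^2 * (c \<bullet> w)) *\<^sub>R c"
    using False unfolding Rot_def Let_def c_def[symmetric]
    apply (simp add: matrix_vector_mult_diff_rdistrib matrix_vector_mult_add_rdistrib
        smat_apply outer_apply)
    apply (simp add: power2_eq_square)
    done
  also have "(1 - a \<bullet> b) * (1 / norm c)^2 * (c \<bullet> w) = (c \<bullet> w) / (1 + a \<bullet> b)"
  proof -
    have "(1 - a \<bullet> b) * (1 + a \<bullet> b) \<noteq> 0" using h1 h2 by simp
    then show ?thesis unfolding power_one_over nc using h1 h2 by (simp add: divide_simps)
  qed
  finally show ?thesis unfolding c_def .
qed

definition Pf :: "real^3 \<Rightarrow> real^3 \<Rightarrow> real^3 \<Rightarrow> real^3" where
  "Pf a b w = (a \<bullet> b) *\<^sub>R w - (b \<bullet> w) *\<^sub>R a + (a \<bullet> w) *\<^sub>R b"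

definition Gf :: "real^3 \<Rightarrow> real^3 \<Rightarrow> real^3 \<Rightarrow> real^3" where
  "Gf a b w = (cross3 a b \<bullet> w) *\<^sub>R cross3 a b"
lemma norm3: "norm (x - y + z) \<le> norm x + norm y + norm (z::'a::real_normed_vector)"
  by (metis add_mono norm_triangle_ineq norm_triangle_ineq4 order_trans order_refl)

lemma norm_add_le2: "norm x \<le> A \<Longrightarrow> norm y \<le> B \<Longrightarrow> norm (x + y) \<le> A + (B::real)"
  by (meson norm_triangle_le add_mono)

lemma norm_cross_le: "norm (cross3 x y) \<le> norm x * norm y"
proof -
  have "(norm (cross3 x y))^2 \<le> (norm x * norm y)^2" using norm_cross_dot[of x y]
    by (metis le_add_same_cancel1 zero_le_power2)
  then show ?thesis by (simp add: power2_le_iff_abs_le)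
qed

lemma abs_inner_unit: "norm (a::real^3) = 1 \<Longrightarrow> norm b = 1 \<Longrightarrow> \<bar>a \<bullet> b\<bar> \<le> 1"
  using Cauchy_Schwarz_ineq2[of a b] by simp

lemma dot_lip:
  fixes a b c d :: "real^3"
  assumes "norm a = 1" "norm b = 1" "norm c = 1" "norm d = 1"
  shows "\<bar>a \<bullet> b - c \<bullet> d\<bar> \<le> norm (a - c) + norm (b - d)"
proof -
  have e: "a \<bullet> b - c \<bullet> d = (a - c) \<bullet> b + c \<bullet> (b - d)" by (simp add: algebra_simps)
  have "\<bar>(a - c) \<bullet> b\<bar> \<le> norm (a - c)" using Cauchy_Schwarz_ineq2[of "a-c" b] assms by simp
  moreover have "\<bar>c \<bullet> (b - d)\<bar> \<le> norm (b - d)" using Cauchy_Schwarz_ineq2[of c "b-d"] assms by simp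
  ultimately show ?thesis unfolding e by linarith
qed

lemma s_lip:
  fixes a b c d :: "real^3"
  shows "\<bar>norm (a - b) - norm (c - d)\<bar> \<le> norm (a - c) + norm (b - d)"
proof -
  have "\<bar>norm (a - b) - norm (c - d)\<bar> \<le> norm ((a - b) - (c - d))" by (rule norm_triangle_ineq3)
  also have "(a - b) - (c - d) = (a - c) - (b - d)" by (simp add: algebra_simps)
  also have "norm ((a - c) - (b - d)) \<le> norm (a - c) + norm (b - d)" by (rule norm_triangle_ineq4)
  finally show ?thesis .
qed

lemma cross_lip:
  fixes a b c d :: "real^3"
  assumes "norm b = 1" "norm c = 1"
  shows "norm (cross3 a b - cross3 c d) \<le> norm (a - c) + norm (b - d)"
proof -
  have e: "cross3 a b - cross3 c d = cross3 (a - c) b + cross3 c (b - d)"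
    by (simp add: Cross3.left_diff_distrib Cross3.right_diff_distrib)
  have "norm (cross3 (a - c) b) \<le> norm (a - c)" using norm_cross_le[of "a-c" b] assms by simp
  moreover have "norm (cross3 c (b - d)) \<le> norm (b - d)" using norm_cross_le[of c "b-d"] assms by simp
  ultimately show ?thesis unfolding e by (meson norm_triangle_le add_mono)
qed

lemma P_bound:
  fixes a b z :: "real^3"
  assumes "norm a = 1" "norm b = 1"
  shows "norm (Pf a b z) \<le> 3 * norm z"
proof -
  have 1: "norm ((a \<bullet> b) *\<^sub>R z) \<le> norm z" using abs_inner_unit[OF assms]
    by (simp add: mult_left_le_one_le)
  have 2: "norm ((b \<bullet> z) *\<^sub>R a) \<le> norm z" using Cauchy_Schwarz_ineq2[of b z] assms by simp
  have 3: "norm ((a \<bullet> z) *\<^sub>R b) \<le> norm z" using Cauchy_Schwarz_ineq2[of a z] assms by simp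
  show ?thesis unfolding Pf_def using 1 2 3 norm3[of "(a \<bullet> b) *\<^sub>R z" "(b \<bullet> z) *\<^sub>R a" "(a \<bullet> z) *\<^sub>R b"]
    by linarith
qed

lemma P_lip:
  fixes a b c d z :: "real^3"
  assumes "norm a = 1" "norm b = 1" "norm c = 1" "norm d = 1"
  shows "norm (Pf a b z - Pf c d z) \<le> 3 * (norm (a - c) + norm (b - d)) * norm z"
proof -
  define D where "D = norm (a - c) + norm (b - d)"
  have e: "Pf a b z - Pf c d z = (a \<bullet> b - c \<bullet> d) *\<^sub>R z
      - (((b \<bullet> z) *\<^sub>R (a - c)) + ((b - d) \<bullet> z) *\<^sub>R c)
      + (((a \<bullet> z) *\<^sub>R (b - d)) + ((a - c) \<bullet> z) *\<^sub>R d)"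
    by (simp add: Pf_def algebra_simps)
  have 1: "norm ((a \<bullet> b - c \<bullet> d) *\<^sub>R z) \<le> D * norm z"
    using dot_lip[OF assms] by (simp add: D_def mult_right_mono)
  have 2: "norm (((b \<bullet> z) *\<^sub>R (a - c)) + ((b - d) \<bullet> z) *\<^sub>R c) \<le> D * norm z"
  proof -
    have "norm ((b \<bullet> z) *\<^sub>R (a - c)) \<le> norm z * norm (a - c)"
      using Cauchy_Schwarz_ineq2[of b z] assms by (simp add: mult_right_mono)
    moreover have "norm (((b - d) \<bullet> z) *\<^sub>R c) \<le> norm (b - d) * norm z"
      using Cauchy_Schwarz_ineq2[of "b-d" z] assms by simp
    ultimately have "norm (((b \<bullet> z) *\<^sub>R (a - c)) + ((b - d) \<bullet> z) *\<^sub>R c) \<le> norm z * norm (a - c) + norm (b - d) * norm z" by (rule norm_add_le2)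
    moreover have "D * norm z = norm (a - c) * norm z + norm (b - d) * norm z"
      by (simp add: D_def distrib_right)
    ultimately show ?thesis by (simp add: mult.commute)
  qed
  have 3: "norm (((a \<bullet> z) *\<^sub>R (b - d)) + ((a - c) \<bullet> z) *\<^sub>R d) \<le> D * norm z"
  proof -
    have "norm ((a \<bullet> z) *\<^sub>R (b - d)) \<le> norm z * norm (b - d)"
      using Cauchy_Schwarz_ineq2[of a z] assms by (simp add: mult_right_mono)
    moreover have "norm (((a - c) \<bullet> z) *\<^sub>R d) \<le> norm (a - c) * norm z"
      using Cauchy_Schwarz_ineq2[of "a-c" z] assms by simp
    ultimately have "norm (((a \<bullet> z) *\<^sub>R (b - d)) + ((a - c) \<bullet> z) *\<^sub>R d) \<le> norm z * norm (b - d) + norm (a - c) * norm z" by (rule norm_add_le2)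
    moreover have "D * norm z = norm (a - c) * norm z + norm (b - d) * norm z"
      by (simp add: D_def distrib_right)
    ultimately show ?thesis by (simp add: mult.commute)
  qed
  show ?thesis unfolding e D_def[symmetric] using 1 2 3
    norm3[of "(a \<bullet> b - c \<bullet> d) *\<^sub>R z" "(b \<bullet> z) *\<^sub>R (a - c) + ((b - d) \<bullet> z) *\<^sub>R c"
      "(a \<bullet> z) *\<^sub>R (b - d) + ((a - c) \<bullet> z) *\<^sub>R d"]
    by linarith
qed

lemma G_lip:
  fixes a b c d z :: "real^3"
  assumes "norm a = 1" "norm b = 1" "norm c = 1" "norm d = 1"
  shows "norm (Gf a b z - Gf c d z) \<le> 2 * (norm (a - c) + norm (b - d)) * norm z"
proof -
  define D where "D = norm (a - c) + norm (b - d)"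
  define p where "p = cross3 a b"
  define q where "q = cross3 c d"
  have pq: "norm (p - q) \<le> D" unfolding p_def q_def D_def using cross_lip assms by blast
  have p1: "norm p \<le> 1" using norm_cross_le[of a b] assms p_def by simp
  have q1: "norm q \<le> 1" using norm_cross_le[of c d] assms q_def by simp
  have e: "Gf a b z - Gf c d z = ((p - q) \<bullet> z) *\<^sub>R p + (q \<bullet> z) *\<^sub>R (p - q)"
    by (simp add: Gf_def p_def[symmetric] q_def[symmetric] algebra_simps)
  have 1: "norm (((p - q) \<bullet> z) *\<^sub>R p) \<le> D * norm z"
  proof -
    have "norm (((p - q) \<bullet> z) *\<^sub>R p) = \<bar>(p - q) \<bullet> z\<bar> * norm p" by simp
    also have "\<dots> \<le> (norm (p - q) * norm z) * 1"
      by (intro mult_mono Cauchy_Schwarz_ineq2 p1) auto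
    also have "\<dots> \<le> D * norm z" using pq by (simp add: mult_right_mono)
    finally show ?thesis .
  qed
  have 2: "norm ((q \<bullet> z) *\<^sub>R (p - q)) \<le> D * norm z"
  proof -
    have "norm ((q \<bullet> z) *\<^sub>R (p - q)) = \<bar>q \<bullet> z\<bar> * norm (p - q)" by simp
    also have "\<dots> \<le> (norm q * norm z) * D"
      by (intro mult_mono Cauchy_Schwarz_ineq2 pq) auto
    also have "\<dots> \<le> (1 * norm z) * D" using q1
      by (intro mult_right_mono) (auto simp: D_def)
    also have "\<dots> = D * norm z" by simp
    finally show ?thesis .
  qed
  show ?thesis unfolding e D_def[symmetric] using norm_add_le2[OF 1 2]
    by linarith
qed

lemma h_facts:
  fixes a b :: "real^3"
  assumes "norm a = 1" "norm b = 1"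
  shows "(norm (a - b))^2 = 2 - 2 * (a \<bullet> b)" "norm (a - b) \<le> 2"
    "2 - norm (a - b) \<le> 1 + a \<bullet> b" "0 \<le> 1 + a \<bullet> b"
    "(norm (cross3 a b))^2 = (1 - a \<bullet> b) * (1 + a \<bullet> b)"
proof -
  show e: "(norm (a - b))^2 = 2 - 2 * (a \<bullet> b)"
    using assms by (simp add: power2_norm_eq_inner algebra_simps inner_commute unit_dot)
  show s2: "norm (a - b) \<le> 2" using norm_triangle_ineq4[of a b] assms by simp
  have s0: "0 \<le> norm (a - b)" by simp
  have "norm (a - b) * norm (a - b) \<le> 2 * norm (a - b)" using s2 s0 by (rule mult_right_mono)
  then show "2 - norm (a - b) \<le> 1 + a \<bullet> b" using e s2 s0 unfolding power2_eq_square
    by linarith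
  show "0 \<le> 1 + a \<bullet> b" using abs_inner_unit[OF assms] by simp
  show "(norm (cross3 a b))^2 = (1 - a \<bullet> b) * (1 + a \<bullet> b)"
    using norm_cross_dot[of a b] assms by (simp add: algebra_simps power2_eq_square)
qed

lemma G_bound:
  fixes a b z :: "real^3"
  assumes "norm a = 1" "norm b = 1"
  shows "norm (Gf a b z) \<le> 2 * (1 + a \<bullet> b) * norm z"
proof -
  have "norm (Gf a b z) = \<bar>cross3 a b \<bullet> z\<bar> * norm (cross3 a b)" by (simp add: Gf_def)
  also have "\<dots> \<le> (norm (cross3 a b) * norm z) * norm (cross3 a b)"
    by (intro mult_right_mono Cauchy_Schwarz_ineq2) auto
  also have "\<dots> = (norm (cross3 a b))^2 * norm z" by (simp add: power2_eq_square mult_ac)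
  also have "\<dots> = (1 - a \<bullet> b) * (1 + a \<bullet> b) * norm z"
    using h_facts(5)[OF assms] by simp
  also have "\<dots> \<le> 2 * (1 + a \<bullet> b) * norm z"
    using abs_inner_unit[OF assms] h_facts(4)[OF assms]
    by (intro mult_right_mono) (auto intro: mult_right_mono)
  finally show ?thesis .
qed


lemma theta_diff:
  fixes p1 p2 h1 h2 K D :: real
  assumes h2: "0 < h2" and h12: "h2 \<le> h1" and p2: "0 \<le> p2" "p2 \<le> K * h2"
    and pd: "\<bar>p1 - p2\<bar> \<le> K * D" and hd: "\<bar>h1 - h2\<bar> \<le> D" and K: "0 \<le> K"
  shows "\<bar>p1 / h1 - p2 / h2\<bar> * h2 \<le> 2 * K * D"
proof -
  have h1: "0 < h1" using h2 h12 by linarith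
  have e: "\<bar>p1 / h1 - p2 / h2\<bar> * h2 = \<bar>(p1 - p2) * (h2 / h1) - (p2 / h1) * (h1 - h2)\<bar>"
  proof -
    have "\<bar>p1 / h1 - p2 / h2\<bar> * h2 = \<bar>(p1 / h1 - p2 / h2) * h2\<bar>" using h2 by (simp add: abs_mult)
    also have "(p1 / h1 - p2 / h2) * h2 = (p1 - p2) * (h2 / h1) - (p2 / h1) * (h1 - h2)"
      using h1 h2 by (simp add: field_simps)
    finally show ?thesis .
  qed
  have r: "0 \<le> h2 / h1" "h2 / h1 \<le> 1" using h1 h2 h12 by auto
  have a1: "\<bar>(p1 - p2) * (h2 / h1)\<bar> \<le> K * D"
  proof -
    have "\<bar>(p1 - p2) * (h2 / h1)\<bar> = \<bar>p1 - p2\<bar> * (h2 / h1)" using r h1 h2 by (simp add: abs_mult)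
    also have "\<dots> \<le> \<bar>p1 - p2\<bar>" using r by (intro mult_left_le) auto
    also have "\<dots> \<le> K * D" by (rule pd)
    finally show ?thesis .
  qed
  have q: "p2 / h1 \<le> K"
  proof -
    have "p2 / h1 \<le> p2 / h2" using p2 h2 h12 by (intro divide_left_mono) auto
    also have "\<dots> \<le> K" using p2 h2 by (simp add: divide_le_eq)
    finally show ?thesis .
  qed
  have a2: "\<bar>(p2 / h1) * (h1 - h2)\<bar> \<le> K * D"
  proof -
    have "\<bar>(p2 / h1) * (h1 - h2)\<bar> = (p2 / h1) * \<bar>h1 - h2\<bar>" using p2 h1 by (simp add: abs_mult)
    also have "\<dots> \<le> K * D" using q hd p2 h1 K by (intro mult_mono) auto
    finally show ?thesis .
  qed
  have "\<bar>(p1 - p2) * (h2 / h1) - (p2 / h1) * (h1 - h2)\<bar> \<le> \<bar>(p1 - p2) * (h2 / h1)\<bar> + \<bar>(p2 / h1) * (h1 - h2)\<bar>"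
    by (rule abs_triangle_ineq4)
  also have "\<dots> \<le> K * D + K * D" using a1 a2 by (rule add_mono)
  finally show ?thesis unfolding e by (simp add: mult_ac)
qed

definition Ff :: "(real \<Rightarrow> real) \<Rightarrow> real^3 \<Rightarrow> real^3 \<Rightarrow> real^3 \<Rightarrow> real^3" where
  "Ff \<psi> a b w = \<psi> (norm (a - b)) *\<^sub>R Pf a b w
     + (\<psi> (norm (a - b)) / (1 + a \<bullet> b)) *\<^sub>R Gf a b w"

lemma Ff_diff: "Ff \<psi> a b w - Ff \<psi> a b z = Ff \<psi> a b (w - z)"
  by (simp add: Ff_def Pf_def Gf_def inner_diff_right algebra_simps)

context
  fixes \<psi> :: "real \<Rightarrow> real" and K :: real
  assumes K0: "0 \<le> K"
    and Klip: "\<forall>s\<in>{0..2}. \<forall>t\<in>{0..2}. \<bar>\<psi> s - \<psi> t\<bar> \<le> K * \<bar>s - t\<bar>"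
    and psi2: "\<psi> 2 = 0"
    and psinn: "\<forall>t\<in>{0..2}. \<psi> t \<ge> 0"
begin

lemma psi_le: assumes "s \<in> {0..2}" shows "\<psi> s \<le> K * (2 - s)"
proof -
  have "\<bar>\<psi> s - \<psi> 2\<bar> \<le> K * \<bar>s - 2\<bar>" using Klip[rule_format, of s 2] assms by simp
  moreover have "\<bar>s - 2\<bar> = 2 - s" using assms by auto
  ultimately show ?thesis using psi2 by auto
qed

lemma s_in: "norm (a::real^3) = 1 \<Longrightarrow> norm b = 1 \<Longrightarrow> norm (a - b) \<in> {0..2}"
  using h_facts(2) by auto

lemma psi_unit_le: "norm (a::real^3) = 1 \<Longrightarrow> norm b = 1 \<Longrightarrow> \<psi> (norm (a - b)) \<le> K * (1 + a \<bullet> b)"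
proof -
  assume a: "norm (a::real^3) = 1" "norm b = 1"
  have "\<psi> (norm (a - b)) \<le> K * (2 - norm (a - b))" using psi_le[OF s_in[OF a]] .
  also have "\<dots> \<le> K * (1 + a \<bullet> b)" using K0 h_facts(3)[OF a] by (intro mult_left_mono) auto
  finally show ?thesis .
qed

lemma psi_unit_bd: "norm (a::real^3) = 1 \<Longrightarrow> norm b = 1 \<Longrightarrow> \<psi> (norm (a - b)) \<le> 2 * K"
proof -
  assume a: "norm (a::real^3) = 1" "norm b = 1"
  have "\<psi> (norm (a - b)) \<le> K * (2 - norm (a - b))" using psi_le[OF s_in[OF a]] .
  also have "\<dots> \<le> K * 2" using K0 by (intro mult_left_mono) auto
  finally show ?thesis by simp
qed

lemma psi_unit_nn: "norm (a::real^3) = 1 \<Longrightarrow> norm b = 1 \<Longrightarrow> 0 \<le> \<psi> (norm (a - b))"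
  using psinn s_in by blast

lemma theta_le: assumes "norm (a::real^3) = 1" "norm b = 1"
  shows "\<psi> (norm (a - b)) / (1 + a \<bullet> b) \<le> K" "0 \<le> \<psi> (norm (a - b)) / (1 + a \<bullet> b)"
proof -
  have h: "0 \<le> 1 + a \<bullet> b" using h_facts(4)[OF assms] .
  show "0 \<le> \<psi> (norm (a - b)) / (1 + a \<bullet> b)" using h psi_unit_nn[OF assms] by simp
  show "\<psi> (norm (a - b)) / (1 + a \<bullet> b) \<le> K"
  proof (cases "1 + a \<bullet> b = 0")
    case True then show ?thesis using K0 by simp
  next
    case False then show ?thesis using h psi_unit_le[OF assms] by (simp add: divide_le_eq)
  qed
qed

end

context
  fixes \<psi> :: "real \<Rightarrow> real" and K :: real
  assumes K0: "0 \<le> K"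
    and Klip: "\<forall>s\<in>{0..2}. \<forall>t\<in>{0..2}. \<bar>\<psi> s - \<psi> t\<bar> \<le> K * \<bar>s - t\<bar>"
    and psi2: "\<psi> 2 = 0"
    and psinn: "\<forall>t\<in>{0..2}. \<psi> t \<ge> 0"
begin

lemmas H = K0 Klip psi2 psinn

lemma norm_scale_le: "\<bar>r\<bar> \<le> R \<Longrightarrow> norm x \<le> X \<Longrightarrow> norm (r *\<^sub>R (x::'a::real_normed_vector)) \<le> R * X"
  by (simp add: mult_mono)

lemma F_bound:
  fixes a b y :: "real^3"
  assumes a: "norm a = 1" and b: "norm b = 1"
  shows "norm (Ff \<psi> a b y) \<le> 10 * K * norm y"
proof -
  define p where "p = \<psi> (norm (a - b))"
  define th where "th = p / (1 + a \<bullet> b)"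
  have p: "0 \<le> p" "p \<le> 2 * K" using psi_unit_nn[OF H a b] psi_unit_bd[OF H a b] p_def by auto
  have th: "0 \<le> th" "th \<le> K" using theta_le[OF H a b] th_def p_def by auto
  have h2: "1 + a \<bullet> b \<le> 2" using abs_inner_unit[OF a b] by simp
  have 1: "norm (p *\<^sub>R Pf a b y) \<le> 2 * K * (3 * norm y)"
    using p by (intro norm_scale_le P_bound[OF a b]) auto
  have "norm (th *\<^sub>R Gf a b y) = th * norm (Gf a b y)" using th by simp
  also have "\<dots> \<le> K * (2 * (1 + a \<bullet> b) * norm y)"
    using th G_bound[OF a b, of y] by (intro mult_mono) auto
  also have "\<dots> \<le> K * (2 * 2 * norm y)"
    using K0 h2 by (intro mult_left_mono mult_right_mono) auto
  finally have 2: "norm (th *\<^sub>R Gf a b y) \<le> K * (2 * 2 * norm y)" .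
  have "norm (Ff \<psi> a b y) \<le> 2 * K * (3 * norm y) + K * (2 * 2 * norm y)"
    unfolding Ff_def p_def[symmetric] th_def[symmetric] using 1 2 by (rule norm_add_le2)
  then show ?thesis by (simp add: algebra_simps)
qed

lemma T2_wlog:
  fixes a b c d z :: "real^3"
  assumes a: "norm a = 1" and b: "norm b = 1" and c: "norm c = 1" and d: "norm d = 1"
    and hh: "1 + c \<bullet> d \<le> 1 + a \<bullet> b"
  shows "norm ((\<psi> (norm (a - b)) / (1 + a \<bullet> b)) *\<^sub>R Gf a b z
     - (\<psi> (norm (c - d)) / (1 + c \<bullet> d)) *\<^sub>R Gf c d z)
     \<le> 6 * K * (norm (a - c) + norm (b - d)) * norm z"
proof -
  define D where "D = norm (a - c) + norm (b - d)"
  define p1 where "p1 = \<psi> (norm (a - b))"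
  define p2 where "p2 = \<psi> (norm (c - d))"
  define h1 where "h1 = 1 + a \<bullet> b"
  define h2 where "h2 = 1 + c \<bullet> d"
  define G1 where "G1 = Gf a b z"
  define G2 where "G2 = Gf c d z"
  have D0: "0 \<le> D" unfolding D_def by simp
  have th1: "0 \<le> p1 / h1" "p1 / h1 \<le> K" using theta_le[OF H a b] p1_def h1_def by auto
  have h20: "0 \<le> h2" using h_facts(4)[OF c d] h2_def by simp
  have e: "(p1 / h1) *\<^sub>R G1 - (p2 / h2) *\<^sub>R G2 = (p1 / h1) *\<^sub>R (G1 - G2) + (p1 / h1 - p2 / h2) *\<^sub>R G2"
    by (simp add: algebra_simps)
  have A: "norm ((p1 / h1) *\<^sub>R (G1 - G2)) \<le> K * (2 * D * norm z)"
    using th1 G_lip[OF a b c d, of z] unfolding G1_def G2_def D_def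
    by (intro norm_scale_le) auto
  have B: "norm ((p1 / h1 - p2 / h2) *\<^sub>R G2) \<le> 4 * K * D * norm z"
  proof (cases "h2 = 0")
    case True
    have "norm G2 \<le> 0" using G_bound[OF c d, of z] True unfolding G2_def h2_def by simp
    then have "G2 = 0" by simp
    then show ?thesis using K0 D0 by simp
  next
    case False
    then have h2p: "0 < h2" using h20 by simp
    have td: "\<bar>p1 / h1 - p2 / h2\<bar> * h2 \<le> 2 * K * D"
    proof (rule theta_diff[OF h2p])
      show "h2 \<le> h1" using hh h1_def h2_def by simp
      show "0 \<le> p2" using psi_unit_nn[OF H c d] p2_def by simp
      show "p2 \<le> K * h2" using psi_unit_le[OF H c d] p2_def h2_def by simp
      show "\<bar>p1 - p2\<bar> \<le> K * D"
      proof -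
        have "\<bar>p1 - p2\<bar> \<le> K * \<bar>norm (a - b) - norm (c - d)\<bar>"
          using Klip s_in[OF H a b] s_in[OF H c d] p1_def p2_def by blast
        also have "\<dots> \<le> K * D" using s_lip[of a b c d] K0 D_def by (intro mult_left_mono) auto
        finally show ?thesis .
      qed
      show "\<bar>h1 - h2\<bar> \<le> D" using dot_lip[OF a b c d] h1_def h2_def D_def by simp
      show "0 \<le> K" by (rule K0)
    qed
    have "norm ((p1 / h1 - p2 / h2) *\<^sub>R G2) = \<bar>p1 / h1 - p2 / h2\<bar> * norm G2" by simp
    also have "\<dots> \<le> \<bar>p1 / h1 - p2 / h2\<bar> * (2 * h2 * norm z)"
      using G_bound[OF c d, of z] unfolding G2_def h2_def by (intro mult_left_mono) auto
    also have "\<dots> = (\<bar>p1 / h1 - p2 / h2\<bar> * h2) * (2 * norm z)" by (simp add: mult_ac)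
    also have "\<dots> \<le> (2 * K * D) * (2 * norm z)" using td by (intro mult_right_mono) auto
    finally show ?thesis by (simp add: mult_ac)
  qed
  have "norm ((p1 / h1) *\<^sub>R G1 - (p2 / h2) *\<^sub>R G2) \<le> K * (2 * D * norm z) + 4 * K * D * norm z"
    unfolding e using A B by (rule norm_add_le2)
  then show ?thesis unfolding p1_def p2_def h1_def h2_def G1_def G2_def D_def
    by (simp add: algebra_simps)
qed

lemma F_lip:
  fixes a b c d z :: "real^3"
  assumes a: "norm a = 1" and b: "norm b = 1" and c: "norm c = 1" and d: "norm d = 1"
  shows "norm (Ff \<psi> a b z - Ff \<psi> c d z) \<le> 15 * K * (norm (a - c) + norm (b - d)) * norm z"
proof -
  define D where "D = norm (a - c) + norm (b - d)"
  have D0: "0 \<le> D" unfolding D_def by simp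
  define p1 where "p1 = \<psi> (norm (a - b))"
  define p2 where "p2 = \<psi> (norm (c - d))"
  define Q1 where "Q1 = (\<psi> (norm (a - b)) / (1 + a \<bullet> b)) *\<^sub>R Gf a b z"
  define Q2 where "Q2 = (\<psi> (norm (c - d)) / (1 + c \<bullet> d)) *\<^sub>R Gf c d z"
  have e: "Ff \<psi> a b z - Ff \<psi> c d z = ((p1 - p2) *\<^sub>R Pf a b z + p2 *\<^sub>R (Pf a b z - Pf c d z)) + (Q1 - Q2)"
    unfolding Ff_def p1_def p2_def Q1_def Q2_def by (simp add: algebra_simps)
  have pd: "\<bar>p1 - p2\<bar> \<le> K * D"
  proof -
    have "\<bar>p1 - p2\<bar> \<le> K * \<bar>norm (a - b) - norm (c - d)\<bar>"
      using Klip s_in[OF H a b] s_in[OF H c d] p1_def p2_def by blast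
    also have "\<dots> \<le> K * D" using s_lip[of a b c d] K0 D_def by (intro mult_left_mono) auto
    finally show ?thesis .
  qed
  have p2: "0 \<le> p2" "p2 \<le> 2 * K" using psi_unit_nn[OF H c d] psi_unit_bd[OF H c d] p2_def by auto
  have T1a: "norm ((p1 - p2) *\<^sub>R Pf a b z) \<le> (K * D) * (3 * norm z)"
    using pd P_bound[OF a b, of z] by (intro norm_scale_le) auto
  have T1b: "norm (p2 *\<^sub>R (Pf a b z - Pf c d z)) \<le> (2 * K) * (3 * D * norm z)"
    using p2 P_lip[OF a b c d, of z] unfolding D_def by (intro norm_scale_le) auto
  have T2: "norm (Q1 - Q2) \<le> 6 * K * D * norm z"
  proof (cases "1 + c \<bullet> d \<le> 1 + a \<bullet> b")
    case True
    then show ?thesis using T2_wlog[OF a b c d True, of z] unfolding Q1_def Q2_def D_def by simp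
  next
    case False
    then have "1 + a \<bullet> b \<le> 1 + c \<bullet> d" by simp
    from T2_wlog[OF c d a b this, of z] have "norm (Q2 - Q1) \<le> 6 * K * D * norm z"
      unfolding Q1_def Q2_def D_def by (simp add: norm_minus_commute add.commute)
    then show ?thesis by (simp add: norm_minus_commute)
  qed
  have "norm (Ff \<psi> a b z - Ff \<psi> c d z) \<le> ((K * D) * (3 * norm z) + (2 * K) * (3 * D * norm z)) + 6 * K * D * norm z"
    unfolding e by (intro norm_add_le2 T1a T1b T2)
  then show ?thesis unfolding D_def by (simp add: algebra_simps)
qed

end

definition nz :: "real^3 \<Rightarrow> real^3" where "nz x = (1 / norm x) *\<^sub>R x"

lemma nz_unit: "x \<noteq> 0 \<Longrightarrow> norm (nz x) = 1"
  by (simp add: nz_def)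

lemma nz_lip:
  assumes x: "x \<noteq> 0" and y: "y \<noteq> 0"
  shows "norm (nz x - nz y) \<le> 2 * norm (x - y) / norm x"
proof -
  have nx: "0 < norm x" using x by simp
  have ny: "0 < norm y" using y by simp
  have e: "nz x - nz y = (1 / norm x) *\<^sub>R (x - y) + ((norm y - norm x) / (norm x * norm y)) *\<^sub>R y"
  proof -
    have "nz x - nz y = (1 / norm x) *\<^sub>R (x - y) + (1 / norm x - 1 / norm y) *\<^sub>R y"
      by (simp add: nz_def algebra_simps)
    moreover have "1 / norm x - 1 / norm y = (norm y - norm x) / (norm x * norm y)"
      using nx ny by (simp add: field_simps)
    ultimately show ?thesis by simp
  qed
  have 1: "norm ((1 / norm x) *\<^sub>R (x - y)) = norm (x - y) / norm x" using nx by simp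
  have 2: "norm (((norm y - norm x) / (norm x * norm y)) *\<^sub>R y) = \<bar>norm y - norm x\<bar> / norm x"
    using nx ny by (simp add: abs_mult)
  have 3: "\<bar>norm y - norm x\<bar> \<le> norm (x - y)"
    by (metis norm_minus_commute norm_triangle_ineq3)
  have "norm (nz x - nz y) \<le> norm (x - y) / norm x + \<bar>norm y - norm x\<bar> / norm x"
    unfolding e using norm_triangle_ineq 1 2 by metis
  also have "\<dots> \<le> norm (x - y) / norm x + norm (x - y) / norm x"
    using 3 nx by (intro add_left_mono divide_right_mono) auto
  finally show ?thesis by simp
qed

lemma Tmap_eq:
  assumes x1: "x1 \<noteq> 0" and x2: "x2 \<noteq> 0" and p2: "\<psi> 2 = 0"
  shows "Tmap \<psi> (x1, x2, v) = Ff \<psi> (nz x2) (nz x1) v"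
proof -
  define u1 where "u1 = nz x1"
  define u2 where "u2 = nz x2"
  have n1: "norm u1 = 1" using nz_unit[OF x1] u1_def by simp
  have n2: "norm u2 = 1" using nz_unit[OF x2] u2_def by simp
  have T: "Tmap \<psi> (x1, x2, v) = (if u1 + u2 \<noteq> 0 then \<psi> (norm (u1 - u2)) *\<^sub>R (Rot u2 u1 *v v) else 0)"
    unfolding Tmap_def Let_def u1_def u2_def nz_def by simp
  show ?thesis
  proof (cases "u1 + u2 = 0")
    case True
    then have "u1 = - u2" by (simp add: eq_neg_iff_add_eq_0)
    then have "u2 - u1 = 2 *\<^sub>R u2" by (simp add: scaleR_2)
    then have "norm (u2 - u1) = 2" using n2 by simp
    then show ?thesis using T True p2 unfolding u1_def[symmetric] u2_def[symmetric] Ff_def by simp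
  next
    case False
    have s: "u2 + u1 \<noteq> 0" using False by (simp add: add.commute)
    show ?thesis using T False unfolding u1_def[symmetric] u2_def[symmetric] Ff_def
      Rot_apply[OF n2 n1 s] Pf_def Gf_def
      by (simp add: norm_minus_commute scaleR_add_right algebra_simps)
  qed
qed

lemma psi_lip_exists:
  fixes \<psi> \<psi>' :: "real \<Rightarrow> real"
  assumes deriv: "\<forall>t\<in>{0..2}. (\<psi> has_real_derivative \<psi>' t) (at t within {0..2})"
    and C1: "continuous_on {0..2} \<psi>'"
  shows "\<exists>K\<ge>0. \<forall>s\<in>{0..2}. \<forall>t\<in>{0..2}. \<bar>\<psi> s - \<psi> t\<bar> \<le> K * \<bar>s - t\<bar>"
proof -
  have "compact (\<psi>' ` {0..2})" using C1 by (intro compact_continuous_image) auto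
  then obtain B where B: "B > 0" "\<forall>x\<in>\<psi>' ` {0..2}. norm x \<le> B"
    using compact_imp_bounded bounded_pos by metis
  have "\<forall>s\<in>{0..2}. \<forall>t\<in>{0..2}. \<bar>\<psi> s - \<psi> t\<bar> \<le> B * \<bar>s - t\<bar>"
  proof (intro ballI)
    fix s t :: real assume s: "s \<in> {0..2}" and t: "t \<in> {0..2}"
    have "norm (\<psi> s - \<psi> t) \<le> B * norm (s - t)"
      by (rule field_differentiable_bound[of "{0..2}" \<psi> \<psi>']) (use deriv B s t in auto)
    then show "\<bar>\<psi> s - \<psi> t\<bar> \<le> B * \<bar>s - t\<bar>" by simp
  qed
  then show ?thesis using B by (intro exI[of _ B]) auto
qed


lemma dist3:
  fixes a a' b b' c c' :: "'a::metric_space"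
  shows "dist a a' \<le> dist (a, b, c) (a', b', c')" "dist b b' \<le> dist (a, b, c) (a', b', c')"
    "dist c c' \<le> dist (a, b, c) (a', b', c')"
proof -
  show "dist a a' \<le> dist (a, b, c) (a', b', c')" using dist_fst_le[of "(a, b, c)" "(a', b', c')"] by simp
  have "dist (b, c) (b', c') \<le> dist (a, b, c) (a', b', c')" using dist_snd_le[of "(a, b, c)" "(a', b', c')"] by simp
  then show "dist b b' \<le> dist (a, b, c) (a', b', c')" "dist c c' \<le> dist (a, b, c) (a', b', c')"
    using dist_fst_le[of "(b, c)" "(b', c')"] dist_snd_le[of "(b, c)" "(b', c')"] by simp_all
qed

theorem lemma3p5:
  fixes \<psi> \<psi>' :: "real \<Rightarrow> real"
  assumes nonneg: "\<forall>t\<in>{0..2}. \<psi> t \<ge> 0"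
    and decr: "\<forall>s\<in>{0..2}. \<forall>t\<in>{0..2}. s \<le> t \<longrightarrow> \<psi> t \<le> \<psi> s"
    and deriv: "\<forall>t\<in>{0..2}. (\<psi> has_real_derivative \<psi>' t) (at t within {0..2})"
    and C1: "continuous_on {0..2} \<psi>'"
    and end0: "\<psi> 2 = 0"
    and dneg: "\<psi>' 2 < 0"
  shows "locally_lipschitz_on Qset (Tmap \<psi>)"
proof -
  obtain K where K0: "0 \<le> K" and Klip: "\<forall>s\<in>{0..2}. \<forall>t\<in>{0..2}. \<bar>\<psi> s - \<psi> t\<bar> \<le> K * \<bar>s - t\<bar>"
    using psi_lip_exists[OF deriv C1] by blast
  note H = K0 Klip end0 nonneg
  show ?thesis unfolding locally_lipschitz_on_def
  proof
    fix p assume "p \<in> Qset"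
    then obtain x1 x2 v where p: "p = (x1, x2, v)" and x1: "x1 \<noteq> 0" and x2: "x2 \<noteq> 0"
      unfolding Qset_def by auto
    define e where "e = min (norm x1) (norm x2) / 2"
    have e0: "0 < e" using x1 x2 by (simp add: e_def)
    have e1: "e \<le> norm x1 - e" "e \<le> norm x2 - e" by (auto simp: e_def)
    define L where "L = 10 * K + 60 * K * (norm v + e) / e"
    have L0: "0 \<le> L" using K0 e0 unfolding L_def by simp
    have "L-lipschitz_on (ball p e \<inter> Qset) (Tmap \<psi>)"
    proof (rule lipschitz_onI[OF _ L0])
      fix q q' assume q: "q \<in> ball p e \<inter> Qset" and q': "q' \<in> ball p e \<inter> Qset"
      obtain y1 y2 w where qe: "q = (y1, y2, w)" and y1: "y1 \<noteq> 0" and y2: "y2 \<noteq> 0"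
        using q unfolding Qset_def by auto
      obtain y1' y2' w' where qe': "q' = (y1', y2', w')" and y1': "y1' \<noteq> 0" and y2': "y2' \<noteq> 0"
        using q' unfolding Qset_def by auto
      have dq: "dist (x1, x2, v) (y1, y2, w) < e" using q p qe by (simp add: dist_commute)
      have dq': "dist (x1, x2, v) (y1', y2', w') < e" using q' p qe' by (simp add: dist_commute)
      define \<delta> where "\<delta> = dist q q'"
      have \<delta>0: "0 \<le> \<delta>" unfolding \<delta>_def by simp
      have ny1: "e \<le> norm y1"
      proof -
        have "norm (x1 - y1) < e" using dist3(1)[where a=x1 and a'=y1 and b=x2 and b'=y2 and c=v and c'=w] dq by (simp add: dist_norm)
        then show ?thesis using e1 norm_triangle_ineq2[of x1 y1] by linarith
      qed
      have ny2: "e \<le> norm y2"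
      proof -
        have "norm (x2 - y2) < e" using dist3(2)[where a=x1 and a'=y1 and b=x2 and b'=y2 and c=v and c'=w] dq by (simp add: dist_norm)
        then show ?thesis using e1 norm_triangle_ineq2[of x2 y2] by linarith
      qed
      have nw': "norm w' \<le> norm v + e"
      proof -
        have "norm (v - w') < e" using dist3(3)[where a=x1 and a'=y1' and b=x2 and b'=y2' and c=v and c'=w'] dq' by (simp add: dist_norm)
        then show ?thesis using norm_triangle_ineq2[of w' v] by (simp add: norm_minus_commute)
      qed
      have d1: "norm (y1 - y1') \<le> \<delta>" using dist3(1)[where a=y1 and a'=y1' and b=y2 and b'=y2' and c=w and c'=w'] qe qe' \<delta>_def by (simp add: dist_norm)
      have d2: "norm (y2 - y2') \<le> \<delta>" using dist3(2)[where a=y1 and a'=y1' and b=y2 and b'=y2' and c=w and c'=w'] qe qe' \<delta>_def by (simp add: dist_norm)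
      have d3: "norm (w - w') \<le> \<delta>" using dist3(3)[where a=y1 and a'=y1' and b=y2 and b'=y2' and c=w and c'=w'] qe qe' \<delta>_def by (simp add: dist_norm)
      define a where "a = nz y2"
      define b where "b = nz y1"
      define c where "c = nz y2'"
      define d where "d = nz y1'"
      have ua: "norm a = 1" "norm b = 1" "norm c = 1" "norm d = 1"
        using nz_unit y1 y2 y1' y2' a_def b_def c_def d_def by auto
      have ac: "norm (a - c) \<le> 2 * \<delta> / e"
      proof -
        have "norm (a - c) \<le> 2 * norm (y2 - y2') / norm y2" unfolding a_def c_def by (rule nz_lip[OF y2 y2'])
        also have "\<dots> \<le> 2 * \<delta> / e" using d2 \<delta>0 e0 ny2 by (intro frac_le) auto
        finally show ?thesis .
      qed
      have bd: "norm (b - d) \<le> 2 * \<delta> / e"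
      proof -
        have "norm (b - d) \<le> 2 * norm (y1 - y1') / norm y1" unfolding b_def d_def by (rule nz_lip[OF y1 y1'])
        also have "\<dots> \<le> 2 * \<delta> / e" using d1 \<delta>0 e0 ny1 by (intro frac_le) auto
        finally show ?thesis .
      qed
      have Tq: "Tmap \<psi> q = Ff \<psi> a b w" using Tmap_eq[where \<psi>=\<psi> and v=w, OF y1 y2 end0] qe a_def b_def by simp
      have Tq': "Tmap \<psi> q' = Ff \<psi> c d w'" using Tmap_eq[where \<psi>=\<psi> and v=w', OF y1' y2' end0] qe' c_def d_def by simp
      have split: "Ff \<psi> a b w - Ff \<psi> c d w' = Ff \<psi> a b (w - w') + (Ff \<psi> a b w' - Ff \<psi> c d w')"
        using Ff_diff[of \<psi> a b w w'] by (simp add: algebra_simps)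
      have A: "norm (Ff \<psi> a b (w - w')) \<le> 10 * K * \<delta>"
        using F_bound[OF H ua(1,2), of "w - w'"] d3 K0
        by (meson mult_left_mono order_trans mult_nonneg_nonneg zero_le_numeral)
      have B: "norm (Ff \<psi> a b w' - Ff \<psi> c d w') \<le> 15 * K * ((4 * \<delta> / e) * (norm v + e))"
      proof -
        have "norm (Ff \<psi> a b w' - Ff \<psi> c d w') \<le> 15 * K * (norm (a - c) + norm (b - d)) * norm w'"
          by (rule F_lip[OF H ua])
        also have "\<dots> = 15 * K * ((norm (a - c) + norm (b - d)) * norm w')" by simp
        also have "\<dots> \<le> 15 * K * ((4 * \<delta> / e) * (norm v + e))"
        proof (intro mult_left_mono mult_mono)
          show "norm (a - c) + norm (b - d) \<le> 4 * \<delta> / e" using ac bd by (simp add: add_divide_distrib[symmetric])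
        qed (use nw' \<delta>0 e0 K0 in auto)
        finally show ?thesis .
      qed
      have "dist (Tmap \<psi> q) (Tmap \<psi> q') \<le> 10 * K * \<delta> + 15 * K * ((4 * \<delta> / e) * (norm v + e))"
        unfolding Tq Tq' dist_norm split using norm_add_le2[OF A B] .
      also have "\<dots> = L * \<delta>" unfolding L_def using e0 by (simp add: field_simps)
      finally show "dist (Tmap \<psi> q) (Tmap \<psi> q') \<le> L * dist q q'" unfolding \<delta>_def .
    qed
    then show "\<exists>e>0. \<exists>L. L-lipschitz_on (ball p e \<inter> Qset) (Tmap \<psi>)" using e0 by blast
  qed
qed

end
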